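(* Let $f$ be a pairwise social choice correspondence that satisfies strong Condorcet-consistency, strategyproofness, and homogeneity. Then $k_f\ge4$.
   Context: Let $A$ be a finite set of $m$ alternatives; a preference profile $R$ assigns a strict total order $\succ_i$ on $A$ to each voter $i$ of a finite non-empty electorate $N\subseteq\{1,2,\dots\}$; $\mathcal{R}^*(A)$ is the set of all profiles. $g_R(x,y)=|\{i: x\succ_i y\}|-|\{i: y\succ_i x\}|$; $x\succsim_R y$ iff $g_R(x,y)\ge0$, strict part $\succ_R$. A Condorcet winner is $x$ with $x\succ_R y$ for all $y\ne x$. A non-empty $X$ is dominant if $x\succ_R y$ for all $x\in X,y\notin X$; $\mathrm{TC}(R)$ is the inclusion-smallest dominant set. An SCC is $f:\mathcal{R}^*(A)\to 2^A\setminus\{\emptyset\}$; pairwise: $f(R)=f(R')$ whenever $g_R=g_{R'}$; homogeneous: $f(kR)=f(R)$ for $k$ copies $kR$ of $R$; strongly Condorcet-consistent: $f(R)=\{x\}$ iff $x$ is the Condorcet winner. Fishburn's extension: for $X\ne Y$, $X\succ_i^F Y$ iff $x\succ_i y$ for all $x\in X\setminus Y,y\in Y$ and for all $x\in X,y\in Y\setminus X$; $f$ is strategyproof if no voter $i$ can change only his own preference to move from $R$ to $R'$ with $f(R')\succ_i^F f(R)$. For an SCC $f$, $k_f\in\{1,\dots,m+1\}$ is the maximal value such that $\mathrm{TC}(R)\subseteq f(R)$ for all profiles $R$ with $|\mathrm{TC}(R)|<k_f$. *)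

theory Defs
  imports Main
begin

text \<open>Alternatives: the finite type 'a (A = UNIV, m = CARD('a)).\<close>

type_synonym 'a profile = "nat \<Rightarrow> ('a \<times> 'a) set option"

definition is_profile :: "'a profile \<Rightarrow> bool" where
  "is_profile R \<longleftrightarrow> finite (dom R) \<and> dom R \<noteq> {} \<and> 0 \<notin> dom R \<and>
     (\<forall>i \<in> dom R. strict_linear_order_on UNIV (the (R i)))"

definition margin :: "'a profile \<Rightarrow> 'a \<Rightarrow> 'a \<Rightarrow> int" where
  "margin R x y = int (card {i \<in> dom R. (x, y) \<in> the (R i)})
                 - int (card {i \<in> dom R. (y, x) \<in> the (R i)})"

definition maj_strict :: "'a profile \<Rightarrow> 'a \<Rightarrow> 'a \<Rightarrow> bool" where
  "maj_strict R x y \<longleftrightarrow> margin R x y \<ge> 0 \<and> \<not> margin R y x \<ge> 0"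

definition condorcet_winner :: "'a profile \<Rightarrow> 'a \<Rightarrow> bool" where
  "condorcet_winner R x \<longleftrightarrow> (\<forall>y. y \<noteq> x \<longrightarrow> maj_strict R x y)"

definition dominant :: "'a profile \<Rightarrow> 'a set \<Rightarrow> bool" where
  "dominant R X \<longleftrightarrow> X \<noteq> {} \<and> (\<forall>x \<in> X. \<forall>y. y \<notin> X \<longrightarrow> maj_strict R x y)"

definition TC :: "'a profile \<Rightarrow> 'a set" where
  "TC R = (THE X. dominant R X \<and> (\<forall>Y. dominant R Y \<longrightarrow> X \<subseteq> Y))"

definition is_SCC :: "('a profile \<Rightarrow> 'a set) \<Rightarrow> bool" where
  "is_SCC f \<longleftrightarrow> (\<forall>R. is_profile R \<longrightarrow> f R \<noteq> {})"

definition pairwise_scc :: "('a profile \<Rightarrow> 'a set) \<Rightarrow> bool" where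
  "pairwise_scc f \<longleftrightarrow> (\<forall>R R'. is_profile R \<longrightarrow> is_profile R' \<longrightarrow>
       margin R = margin R' \<longrightarrow> f R = f R')"

text \<open>R' consists of k copies of R: each voter of R is replaced by exactly k voters
  with the same preference.\<close>
definition copies :: "nat \<Rightarrow> 'a profile \<Rightarrow> 'a profile \<Rightarrow> bool" where
  "copies k R R' \<longleftrightarrow> (\<exists>\<sigma>. (\<forall>j \<in> dom R'. \<sigma> j \<in> dom R \<and> R' j = R (\<sigma> j)) \<and>
       (\<forall>i \<in> dom R. card {j \<in> dom R'. \<sigma> j = i} = k))"

definition homogeneous :: "('a profile \<Rightarrow> 'a set) \<Rightarrow> bool" where
  "homogeneous f \<longleftrightarrow> (\<forall>k R R'. k \<ge> 1 \<longrightarrow> is_profile R \<longrightarrow> is_profile R' \<longrightarrow>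
       copies k R R' \<longrightarrow> f R' = f R)"

definition strongly_condorcet_consistent :: "('a profile \<Rightarrow> 'a set) \<Rightarrow> bool" where
  "strongly_condorcet_consistent f \<longleftrightarrow>
     (\<forall>R x. is_profile R \<longrightarrow> (f R = {x} \<longleftrightarrow> condorcet_winner R x))"

definition fishburn :: "('a \<times> 'a) set \<Rightarrow> 'a set \<Rightarrow> 'a set \<Rightarrow> bool" where
  "fishburn P X Y \<longleftrightarrow> X \<noteq> Y \<and>
     (\<forall>x \<in> X - Y. \<forall>y \<in> Y. (x, y) \<in> P) \<and> (\<forall>x \<in> X. \<forall>y \<in> Y - X. (x, y) \<in> P)"

definition strategyproof :: "('a profile \<Rightarrow> 'a set) \<Rightarrow> bool" where
  "strategyproof f \<longleftrightarrow> (\<forall>R R' i. is_profile R \<longrightarrow> is_profile R' \<longrightarrow> i \<in> dom R \<longrightarrow>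
       dom R' = dom R \<longrightarrow> (\<forall>j. j \<noteq> i \<longrightarrow> R' j = R j) \<longrightarrow>
       \<not> fishburn (the (R i)) (f R') (f R))"

definition k_f :: "('a::finite profile \<Rightarrow> 'a set) \<Rightarrow> nat" where
  "k_f f = Max {k \<in> {1..card (UNIV :: 'a set) + 1}.
      \<forall>R. is_profile R \<longrightarrow> card (TC R) < k \<longrightarrow> TC R \<subseteq> f R}"

end

theory Submission
  imports Defs
begin

lemma margin_antisym: "margin R y x = - margin R x y"
  by (simp add: margin_def)

lemma maj_strict_iff: "maj_strict R x y \<longleftrightarrow> margin R x y > 0"
  using margin_antisym[of R x y] by (auto simp: maj_strict_def)

definition cwm :: "('a \<Rightarrow> 'a \<Rightarrow> int) \<Rightarrow> 'a \<Rightarrow> bool" where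
  "cwm h x \<longleftrightarrow> (\<forall>y. y \<noteq> x \<longrightarrow> 0 < h x y)"

lemma cw_iff: "condorcet_winner R x \<longleftrightarrow> cwm (margin R) x"
  by (simp add: condorcet_winner_def cwm_def maj_strict_iff)

lemma margin_upd:
  assumes "finite (dom R)" "i \<notin> dom R"
  shows "margin (R(i \<mapsto> P)) x y = margin R x y + (if (x,y) \<in> P then 1 else 0) - (if (y,x) \<in> P then 1 else 0)"
proof -
  have e: "\<And>u v. {j \<in> dom (R(i \<mapsto> P)). (u,v) \<in> the ((R(i \<mapsto> P)) j)}
      = (if (u,v) \<in> P then {i} else {}) \<union> {j \<in> dom R. (u,v) \<in> the (R j)}"
    using assms(2) by auto
  have c: "\<And>u v. card {j \<in> dom (R(i \<mapsto> P)). (u,v) \<in> the ((R(i \<mapsto> P)) j)}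
      = (if (u,v) \<in> P then 1 else 0) + card {j \<in> dom R. (u,v) \<in> the (R j)}"
    unfolding e using assms by (subst card_Un_disjoint) auto
  show ?thesis unfolding margin_def c by simp
qed

lemma slo_converse: "strict_linear_order Q \<Longrightarrow> strict_linear_order (converse Q)"
  by (auto simp: strict_linear_order_on_def trans_on_def irrefl_def total_on_def)

lemma slo_asym: "strict_linear_order Q \<Longrightarrow> (x,y) \<in> Q \<Longrightarrow> (y,x) \<notin> Q"
  unfolding strict_linear_order_on_def trans_on_def irrefl_def by blast

lemma slo_total: "strict_linear_order Q \<Longrightarrow> x \<noteq> y \<Longrightarrow> (x,y) \<notin> Q \<Longrightarrow> (y,x) \<in> Q"
  unfolding strict_linear_order_on_def total_on_def by blast

lemma slo_irrefl: "strict_linear_order Q \<Longrightarrow> (x,x) \<notin> Q"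
  unfolding strict_linear_order_on_def irrefl_def by blast

definition realm :: "('a \<Rightarrow> 'a \<Rightarrow> int) \<Rightarrow> bool" where
  "realm h \<longleftrightarrow> (\<exists>R. is_profile R \<and> margin R = h)"

lemma real_antisym: "realm h \<Longrightarrow> h y x = - h x y"
  unfolding realm_def by (metis margin_antisym)

lemma margin_parity:
  assumes "is_profile R" "x \<noteq> y"
  shows "margin R x y + 2 * int (card {i \<in> dom R. (y, x) \<in> the (R i)}) = int (card (dom R))"
proof -
  let ?A = "{i \<in> dom R. (x, y) \<in> the (R i)}" and ?B = "{i \<in> dom R. (y, x) \<in> the (R i)}"
  have fin: "finite (dom R)" using assms by (simp add: is_profile_def)
  have "dom R = ?A \<union> ?B" using assms by (auto simp: is_profile_def intro: slo_total)
  moreover have "?A \<inter> ?B = {}" using assms by (auto simp: is_profile_def dest: slo_asym)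
  ultimately have "card (dom R) = card ?A + card ?B"
    using fin by (metis (no_types, lifting) card_Un_disjoint finite_Un)
  then show ?thesis by (simp add: margin_def)
qed

lemma real_parity:
  assumes "realm h" "x \<noteq> y" "u \<noteq> v"
  shows "even (h x y - h u v)"
proof -
  obtain R where R: "is_profile R" "margin R = h" using assms by (auto simp: realm_def)
  from margin_parity[OF R(1) assms(2)] margin_parity[OF R(1) assms(3)] R(2)
  have "h x y - h u v = 2 * (int (card {i \<in> dom R. (v, u) \<in> the (R i)}) - int (card {i \<in> dom R. (y, x) \<in> the (R i)}))"
    by (simp add: algebra_simps)
  then show ?thesis by simp
qed

definition shiftm :: "('a \<Rightarrow> 'a \<Rightarrow> int) \<Rightarrow> 'a \<Rightarrow> 'a \<Rightarrow> 'a \<Rightarrow> 'a \<Rightarrow> int" where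
  "shiftm h t s = (\<lambda>x y. if x = t \<and> y = s then h x y + 2 else if x = s \<and> y = t then h x y - 2 else h x y)"

locale scc =
  fixes f :: "'a::finite profile \<Rightarrow> 'a set"
  assumes isscc: "is_SCC f" and pw: "pairwise_scc f"
    and scc_cc: "strongly_condorcet_consistent f" and sp: "strategyproof f"
begin

definition F :: "('a \<Rightarrow> 'a \<Rightarrow> int) \<Rightarrow> 'a set" where
  "F h = f (SOME R. is_profile R \<and> margin R = h)"

lemma F_eq: assumes "is_profile R" shows "F (margin R) = f R"
proof -
  have "\<exists>R'. is_profile R' \<and> margin R' = margin R" using assms by blast
  then have "is_profile (SOME R'. is_profile R' \<and> margin R' = margin R) \<and>
      margin (SOME R'. is_profile R' \<and> margin R' = margin R) = margin R" by (rule someI_ex)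
  then show ?thesis using pw assms unfolding F_def pairwise_scc_def by metis
qed

lemma F_single: assumes "realm h" shows "F h = {x} \<longleftrightarrow> cwm h x"
proof -
  obtain R where R: "is_profile R" "margin R = h" using assms by (auto simp: realm_def)
  then show ?thesis using F_eq[OF R(1)] scc_cc cw_iff[of R x]
    unfolding strongly_condorcet_consistent_def by metis
qed

lemma SWbase:
  assumes "realm h" "s \<noteq> t" "strict_linear_order Q" "strict_linear_order Q'"
    "(s,t) \<in> Q" "(t,s) \<in> Q'" "\<And>x y. (x,y) \<noteq> (s,t) \<Longrightarrow> (x,y) \<noteq> (t,s) \<Longrightarrow> ((x,y) \<in> Q' \<longleftrightarrow> (x,y) \<in> Q)"
  shows "realm (shiftm h t s) \<and> \<not> fishburn Q (F (shiftm h t s)) (F h)"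
proof -
  obtain R where R: "is_profile R" "margin R = h" using assms by (auto simp: realm_def)
  have fin: "finite (dom R)" using R by (simp add: is_profile_def)
  define i where "i = Suc (Max (insert 0 (dom R)))"
  define j where "j = Suc i"
  have iR: "i \<notin> dom R"
  proof
    assume "i \<in> dom R"
    then have "i \<le> Max (insert 0 (dom R))" using fin by simp
    then show False unfolding i_def by simp
  qed
  have jR: "j \<notin> dom R"
  proof
    assume "j \<in> dom R"
    then have "j \<le> Max (insert 0 (dom R))" using fin by simp
    then show False unfolding j_def i_def by simp
  qed
  have ij: "i \<noteq> j" "i \<noteq> 0" "j \<noteq> 0" unfolding j_def i_def by auto
  define R1 where "R1 = (R(i \<mapsto> Q))(j \<mapsto> converse Q)"
  define R2 where "R2 = (R(i \<mapsto> Q'))(j \<mapsto> converse Q)"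
  have slo: "strict_linear_order (converse Q)" using assms(3) by (rule slo_converse)
  have P1: "is_profile R1" using R(1) ij assms(3) slo unfolding R1_def is_profile_def by auto
  have P2: "is_profile R2" using R(1) ij assms(4) slo unfolding R2_def is_profile_def by auto
  have m1: "margin R1 = h"
  proof (intro ext)
    fix x y
    have "margin R1 x y = margin (R(i \<mapsto> Q)) x y + (if (x,y) \<in> converse Q then 1 else 0) - (if (y,x) \<in> converse Q then 1 else 0)"
      unfolding R1_def using fin jR ij by (subst margin_upd) auto
    also have "\<dots> = margin R x y" using fin iR by (simp add: margin_upd)
    finally show "margin R1 x y = h x y" using R(2) by simp
  qed
  have m2: "margin R2 = shiftm h t s"
  proof (intro ext)
    fix x y
    have "margin R2 x y = margin (R(i \<mapsto> Q')) x y + (if (x,y) \<in> converse Q then 1 else 0) - (if (y,x) \<in> converse Q then 1 else 0)"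
      unfolding R2_def using fin jR ij by (subst margin_upd) auto
    also have "\<dots> = margin R x y + (if (x,y) \<in> Q' then 1 else 0) - (if (y,x) \<in> Q' then 1 else 0)
        + (if (y,x) \<in> Q then 1 else 0) - (if (x,y) \<in> Q then 1 else 0)" using fin iR by (simp add: margin_upd)
    also have "\<dots> = shiftm h t s x y"
    proof -
      have a1: "(t,s) \<notin> Q" using slo_asym[OF assms(3) assms(5)] .
      have a2: "(s,t) \<notin> Q'" using slo_asym[OF assms(4) assms(6)] .
      show ?thesis
        using assms(2,5,6) assms(7)[of x y] assms(7)[of y x] a1 a2 R(2) unfolding shiftm_def by auto
    qed
    finally show "margin R2 x y = shiftm h t s x y" .
  qed
  have "\<not> fishburn (the (R1 i)) (f R2) (f R1)"
    using sp P1 P2 ij unfolding strategyproof_def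
    by (elim allE[of _ R1] allE[of _ R2] allE[of _ i]) (auto simp: R1_def R2_def)
  moreover have "the (R1 i) = Q" using ij by (simp add: R1_def)
  ultimately show ?thesis using F_eq[OF P1] F_eq[OF P2] m1 m2 P2 by (auto simp: realm_def)
qed

end

definition lexo :: "('a \<Rightarrow> nat) \<Rightarrow> ('a \<Rightarrow> nat) \<Rightarrow> 'a rel" where
  "lexo blk tb = {(x,y). blk x < blk y \<or> (blk x = blk y \<and> tb x < tb y)}"

lemma lexo_slo: assumes "inj tb" shows "strict_linear_order (lexo blk tb)"
proof -
  have d: "tb x \<noteq> tb y" if "x \<noteq> y" for x y using assms that by (auto dest: injD)
  have "trans (lexo blk tb)" unfolding trans_on_def lexo_def by auto
  moreover have "irrefl (lexo blk tb)" unfolding irrefl_def lexo_def by auto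
  moreover have "total (lexo blk tb)" unfolding total_on_def lexo_def using d
    by (metis (mono_tags, lifting) case_prodI linorder_neqE_nat mem_Collect_eq)
  ultimately show ?thesis unfolding strict_linear_order_on_def by blast
qed

lemma layered:
  fixes X Z :: "'a::finite set"
  assumes st: "s \<noteq> t" and XZ: "X \<noteq> Z" and n1: "\<not>(s \<in> Z \<and> t \<in> X \<and> \<not>(s \<in> X \<and> t \<in> Z))"
    and n2: "\<not>(s \<in> X \<and> s \<notin> Z \<and> t \<in> Z \<and> t \<notin> X)"
  shows "\<exists>Q Q'. strict_linear_order Q \<and> strict_linear_order Q' \<and> (s,t) \<in> Q \<and> (t,s) \<in> Q' \<and>
     (\<forall>x y. (x,y) \<noteq> (s,t) \<longrightarrow> (x,y) \<noteq> (t,s) \<longrightarrow> ((x,y) \<in> Q' \<longleftrightarrow> (x,y) \<in> Q)) \<and> fishburn Q X Z"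
proof -
  obtain \<iota> :: "'a \<Rightarrow> nat" and n where "\<iota> ` UNIV = {i. i < n} \<and> inj_on \<iota> UNIV"
    using finite_imp_inj_to_nat_seg[of "UNIV :: 'a set"] by auto
  then have inj: "inj \<iota>" by simp
  define lay where "lay x = (if x \<in> X - Z then 1 else if x \<in> X \<inter> Z then 2 else if x \<in> Z - X then 3 else (4::nat))" for x
  define k where "k = (if lay t \<noteq> 4 then lay t else lay s)"
  define blk where "blk x = (if x = s \<or> x = t then k else lay x)" for x
  define tb where "tb x = (if x = s then 0 else if x = t then 1 else \<iota> x + (2::nat))" for x
  define tb' where "tb' x = (if x = s then 1 else if x = t then 0 else \<iota> x + (2::nat))" for x
  have it: "inj tb"
  proof (rule injI)
    fix x y assume "tb x = tb y" then show "x = y"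
      using inj st by (cases "x = s"; cases "x = t"; cases "y = s"; cases "y = t") (auto simp: tb_def dest: injD)
  qed
  have it': "inj tb'"
  proof (rule injI)
    fix x y assume "tb' x = tb' y" then show "x = y"
      using inj st by (cases "x = s"; cases "x = t"; cases "y = s"; cases "y = t") (auto simp: tb'_def dest: injD)
  qed
  have q1: "(s,t) \<in> lexo blk tb" using st by (simp add: lexo_def blk_def tb_def)
  have q2: "(t,s) \<in> lexo blk tb'" using st by (simp add: lexo_def blk_def tb'_def)
  have q3: "(x,y) \<in> lexo blk tb' \<longleftrightarrow> (x,y) \<in> lexo blk tb" if xy: "(x,y) \<noteq> (s,t)" "(x,y) \<noteq> (t,s)" for x y
  proof -
    have "tb' x < tb' y \<longleftrightarrow> tb x < tb y"
    proof (cases "x = s \<or> x = t \<or> y = s \<or> y = t")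
      case False then show ?thesis by (simp add: tb_def tb'_def)
    next
      case True
      then show ?thesis using xy st by (elim disjE) (auto simp: tb_def tb'_def)
    qed
    then show ?thesis by (simp add: lexo_def)
  qed
  have l4: "lay x \<noteq> 4 \<longleftrightarrow> x \<in> X \<union> Z" for x unfolding lay_def by auto
  have lr: "lay x = 1 \<or> lay x = 2 \<or> lay x = 3 \<or> lay x = 4" for x unfolding lay_def by auto
  have L1: "lay x = 1 \<longleftrightarrow> x \<in> X \<and> x \<notin> Z" for x by (simp add: lay_def)
  have L2: "lay x = 2 \<longleftrightarrow> x \<in> X \<and> x \<in> Z" for x by (simp add: lay_def)
  have L3: "lay x = 3 \<longleftrightarrow> x \<notin> X \<and> x \<in> Z" for x by (simp add: lay_def)
  have L4: "lay x = 4 \<longleftrightarrow> x \<notin> X \<and> x \<notin> Z" for x by (simp add: lay_def)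
  have c1: "\<not> ((lay s = 2 \<or> lay s = 3) \<and> (lay t = 1 \<or> lay t = 2) \<and> \<not> (lay s = 2 \<and> lay t = 2))"
    unfolding L1 L2 L3 using n1 by blast
  have c2: "\<not> (lay s = 1 \<and> lay t = 3)" unfolding L1 L3 using n2 by blast
  have cst: "lay s \<le> lay t \<and> lay t \<le> lay s + 1" if "lay s \<noteq> 4" "lay t \<noteq> 4"
    using that c1 c2 lr[of s] lr[of t] by auto
  have bst: "blk s = k" "blk t = k" by (auto simp: blk_def)
  have bo: "blk x = lay x" if "x \<noteq> s" "x \<noteq> t" for x using that by (simp add: blk_def)
  have claim: "(x,y) \<in> lexo blk tb" if xy: "lay x \<noteq> 4" "lay y \<noteq> 4" "lay x < lay y" for x y
  proof -
    have "blk x < blk y \<or> (blk x = blk y \<and> tb x < tb y)"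
    proof (cases "x = s \<or> x = t")
      case True
      then show ?thesis
      proof
        assume xs: "x = s"
        show ?thesis
        proof (cases "y = t")
          case True then show ?thesis using xs st bst by (simp add: tb_def)
        next
          case False
          then have "y \<noteq> s" using xs xy by auto
          then have "blk y = lay y" "tb y \<ge> 2" using bo False by (auto simp: tb_def)
          moreover have "k \<le> lay y" using cst xy xs unfolding k_def by auto
          ultimately show ?thesis using xs bst by (auto simp: tb_def)
        qed
      next
        assume xt: "x = t"
        show ?thesis
        proof (cases "y = s")
          case True then show ?thesis using xt xy cst by auto
        next
          case False
          then have "y \<noteq> t" using xt xy by auto
          then have "blk y = lay y" using bo False by auto
          moreover have "k < lay y" using xy xt unfolding k_def by auto
          ultimately show ?thesis using xt bst by auto
        qed
      qed
    next
      case False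
      then have bx: "blk x = lay x" using bo by auto
      show ?thesis
      proof (cases "y = s \<or> y = t")
        case True
        then have "lay x < k" using xy cst unfolding k_def by auto
        then show ?thesis using True bx bst by auto
      next
        case False
        then show ?thesis using bx bo xy by auto
      qed
    qed
    then show ?thesis by (simp add: lexo_def)
  qed
  have fb: "fishburn (lexo blk tb) X Z"
    unfolding fishburn_def
  proof (intro conjI ballI)
    show "X \<noteq> Z" by (rule XZ)
  next
    fix x y assume "x \<in> X - Z" "y \<in> Z"
    then show "(x,y) \<in> lexo blk tb" by (intro claim) (auto simp: lay_def)
  next
    fix x y assume "x \<in> X" "y \<in> Z - X"
    then show "(x,y) \<in> lexo blk tb" by (intro claim) (auto simp: lay_def)
  qed
  show ?thesis
    using lexo_slo[OF it] lexo_slo[OF it'] q1 q2 q3 fb by blast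
qed


context scc begin

lemma SWprop:
  assumes "realm h" "s \<noteq> t"
  shows "F (shiftm h t s) = F h \<or> (s \<in> F h \<and> t \<in> F (shiftm h t s) \<and> \<not> (s \<in> F (shiftm h t s) \<and> t \<in> F h))
     \<or> (s \<in> F (shiftm h t s) \<and> s \<notin> F h \<and> t \<in> F h \<and> t \<notin> F (shiftm h t s))"
proof (rule ccontr)
  assume H: "\<not> ?thesis"
  then have c: "F (shiftm h t s) \<noteq> F h"
    "\<not> (s \<in> F h \<and> t \<in> F (shiftm h t s) \<and> \<not> (s \<in> F (shiftm h t s) \<and> t \<in> F h))"
    "\<not> (s \<in> F (shiftm h t s) \<and> s \<notin> F h \<and> t \<in> F h \<and> t \<notin> F (shiftm h t s))"
    by blast+
  obtain Q Q' where q: "strict_linear_order Q \<and> strict_linear_order Q' \<and> (s,t) \<in> Q \<and> (t,s) \<in> Q' \<and>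
     (\<forall>x y. (x,y) \<noteq> (s,t) \<longrightarrow> (x,y) \<noteq> (t,s) \<longrightarrow> ((x,y) \<in> Q' \<longleftrightarrow> (x,y) \<in> Q)) \<and> fishburn Q (F (shiftm h t s)) (F h)"
    using layered[OF assms(2) c] by blast
  then have q5: "\<And>x y. (x,y) \<noteq> (s,t) \<Longrightarrow> (x,y) \<noteq> (t,s) \<Longrightarrow> ((x,y) \<in> Q' \<longleftrightarrow> (x,y) \<in> Q)" by blast
  have "\<not> fishburn Q (F (shiftm h t s)) (F h)" using SWbase[OF assms _ _ _ _ q5] q by blast
  then show False using q by blast
qed

lemma real_shift: "realm (h :: 'a \<Rightarrow> 'a \<Rightarrow> int) \<Longrightarrow> s \<noteq> t \<Longrightarrow> realm (shiftm h t s)"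
proof -
  assume a: "realm h" "s \<noteq> t"
  have c: "{s} \<noteq> {s,t}" "\<not> (s \<in> {s,t} \<and> t \<in> {s} \<and> \<not> (s \<in> {s} \<and> t \<in> {s,t}))"
    "\<not> (s \<in> {s} \<and> s \<notin> {s,t} \<and> t \<in> {s,t} \<and> t \<notin> {s})" using a(2) by auto
  obtain Q Q' where q: "strict_linear_order Q \<and> strict_linear_order Q' \<and> (s,t) \<in> Q \<and> (t,s) \<in> Q' \<and>
     (\<forall>x y. (x,y) \<noteq> (s,t) \<longrightarrow> (x,y) \<noteq> (t,s) \<longrightarrow> ((x,y) \<in> Q' \<longleftrightarrow> (x,y) \<in> Q)) \<and> fishburn Q {s} {s,t}"
    using layered[OF a(2) c] by blast
  then have q5: "\<And>x y. (x,y) \<noteq> (s,t) \<Longrightarrow> (x,y) \<noteq> (t,s) \<Longrightarrow> ((x,y) \<in> Q' \<longleftrightarrow> (x,y) \<in> Q)" by blast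
  show ?thesis using SWbase[OF a _ _ _ _ q5] q by blast
qed

lemma C1:
  assumes "realm h" "s \<noteq> t" "\<forall>x. \<not> cwm h x" "cwm (shiftm h t s) t"
  shows "s \<in> F h"
proof -
  have r: "realm (shiftm h t s)" by (rule real_shift[OF assms(1,2)])
  have X: "F (shiftm h t s) = {t}" using F_single[OF r, of t] assms(4) by simp
  have Z: "F h \<noteq> {t}" using F_single[OF assms(1), of t] assms(3) by simp
  show ?thesis using SWprop[OF assms(1,2)] X Z assms(2) by auto
qed

lemma Core:
  assumes "realm h" "s \<noteq> t" "s \<in> F (shiftm h t s)" "t \<in> F (shiftm h t s)"
  shows "s \<in> F h"
  using SWprop[OF assms(1,2)] assms(3,4) by auto

lemma Eqv:
  assumes "realm h" "s \<noteq> t" "s \<in> F (shiftm h t s)" "t \<in> F (shiftm h t s)" "s \<in> F h" "t \<in> F h"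
  shows "F (shiftm h t s) = F h"
  using SWprop[OF assms(1,2)] assms(3-6) by auto

end

definition dl :: "'a \<Rightarrow> 'a \<Rightarrow> 'a \<Rightarrow> 'a \<Rightarrow> int" where
  "dl u v x y = (if x = u \<and> y = v then 1 else if x = v \<and> y = u then -1 else 0)"

definition sh :: "'a \<Rightarrow> 'a \<Rightarrow> 'a \<Rightarrow> ('a \<Rightarrow> 'a \<Rightarrow> int) \<Rightarrow> int \<Rightarrow> int \<Rightarrow> int \<Rightarrow> ('a \<Rightarrow> 'a \<Rightarrow> int)" where
  "sh a b c h i j k = (\<lambda>x y. h x y + 2*i*dl a b x y + 2*j*dl b c x y + 2*k*dl c a x y)"

definition outs :: "'a \<Rightarrow> 'a \<Rightarrow> 'a \<Rightarrow> ('a \<Rightarrow> 'a \<Rightarrow> int) \<Rightarrow> bool" where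
  "outs a b c h \<longleftrightarrow> (\<forall>d. d \<notin> {a,b,c} \<longrightarrow> 0 < h a d \<and> 0 < h b d \<and> 0 < h c d)"

lemma sh_0: "sh a b c h 0 0 0 = h"
  by (simp add: sh_def)

lemma sh_sh: "sh a b c (sh a b c h i j k) i' j' k' = sh a b c h (i+i') (j+j') (k+k')"
  by (simp add: sh_def algebra_simps)

lemma dl_swap: "u \<noteq> v \<Longrightarrow> dl v u x y = - dl u v x y"
  unfolding dl_def by (cases "x = u"; cases "y = v"; cases "x = v"; cases "y = u") simp_all

lemma shiftm_dl: "t \<noteq> s \<Longrightarrow> shiftm h t s = (\<lambda>x y. h x y + 2 * dl t s x y)"
  unfolding shiftm_def dl_def fun_eq_iff by (intro allI) (cases "x = t"; cases "y = s"; cases "x = s"; cases "y = t"; simp)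

context
  fixes a b c :: 'a
  assumes d: "a \<noteq> b" "b \<noteq> c" "a \<noteq> c"
begin

lemma sh_ab: "shiftm (sh a b c h i j k) a b = sh a b c h (i+1) j k"
  using d by (simp add: shiftm_dl sh_def fun_eq_iff algebra_simps)
lemma sh_ba: "shiftm (sh a b c h i j k) b a = sh a b c h (i-1) j k"
  using d by (simp add: shiftm_dl sh_def fun_eq_iff algebra_simps dl_swap[of a b])
lemma sh_bc: "shiftm (sh a b c h i j k) b c = sh a b c h i (j+1) k"
  using d by (simp add: shiftm_dl sh_def fun_eq_iff algebra_simps)
lemma sh_cb: "shiftm (sh a b c h i j k) c b = sh a b c h i (j-1) k"
  using d by (simp add: shiftm_dl sh_def fun_eq_iff algebra_simps dl_swap[of b c])
lemma sh_ca: "shiftm (sh a b c h i j k) c a = sh a b c h i j (k+1)"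
  using d by (simp add: shiftm_dl sh_def fun_eq_iff algebra_simps)
lemma sh_ac: "shiftm (sh a b c h i j k) a c = sh a b c h i j (k-1)"
  using d by (simp add: shiftm_dl sh_def fun_eq_iff algebra_simps dl_swap[of c a])

lemma sh_vals:
  "sh a b c h i j k a b = h a b + 2*i" "sh a b c h i j k b a = h b a - 2*i"
  "sh a b c h i j k b c = h b c + 2*j" "sh a b c h i j k c b = h c b - 2*j"
  "sh a b c h i j k c a = h c a + 2*k" "sh a b c h i j k a c = h a c - 2*k"
  using d by (simp_all add: sh_def dl_def)

lemma sh_out: assumes "x \<notin> {a,b,c} \<or> y \<notin> {a,b,c}" shows "sh a b c h i j k x y = h x y"
proof -
  have "dl a b x y = 0" "dl b c x y = 0" "dl c a x y = 0" using assms unfolding dl_def by auto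
  then show ?thesis by (simp add: sh_def)
qed

lemma outs_sh: "outs a b c h \<Longrightarrow> outs a b c (sh a b c h i j k)"
  unfolding outs_def using sh_out by simp

lemma cw3:
  assumes "\<And>x y. h y x = - h x y" "outs a b c h"
  shows "cwm h x \<longleftrightarrow> (x = a \<and> 0 < h a b \<and> 0 < h a c) \<or> (x = b \<and> 0 < h b a \<and> 0 < h b c) \<or> (x = c \<and> 0 < h c a \<and> 0 < h c b)"
proof
  assume cw: "cwm h x"
  show "(x = a \<and> 0 < h a b \<and> 0 < h a c) \<or> (x = b \<and> 0 < h b a \<and> 0 < h b c) \<or> (x = c \<and> 0 < h c a \<and> 0 < h c b)"
  proof (cases "x \<in> {a,b,c}")
    case True then show ?thesis using cw d unfolding cwm_def by auto
  next
    case False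
    then have "0 < h a x" using assms(2) unfolding outs_def by auto
    moreover have "0 < h x a" using cw False unfolding cwm_def by auto
    ultimately show ?thesis using assms(1)[of a x] by simp
  qed
next
  assume H: "(x = a \<and> 0 < h a b \<and> 0 < h a c) \<or> (x = b \<and> 0 < h b a \<and> 0 < h b c) \<or> (x = c \<and> 0 < h c a \<and> 0 < h c b)"
  show "cwm h x" unfolding cwm_def
  proof (intro allI impI)
    fix y assume "y \<noteq> x"
    then show "0 < h x y" using H assms(2) d unfolding outs_def by (cases "y \<in> {a,b,c}") auto
  qed
qed

end

context scc begin

lemma real_sh1: "realm (h :: 'a \<Rightarrow> 'a \<Rightarrow> int) \<Longrightarrow> u \<noteq> v \<Longrightarrow> v \<noteq> w \<Longrightarrow> u \<noteq> w \<Longrightarrow> realm (sh u v w h i 0 0)"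
proof (induction i rule: int_induct[where k=0])
  case base then show ?case by (simp add: sh_0)
next
  case (step1 i)
  then have "realm (shiftm (sh u v w h i 0 0) u v)" by (intro real_shift) auto
  then show ?case using sh_ab[of u v w] step1 by simp
next
  case (step2 i)
  then have "realm (shiftm (sh u v w h i 0 0) v u)" by (intro real_shift) auto
  then show ?case using sh_ba[of u v w] step2 by simp
qed

lemma real_sh:
  assumes "realm (h :: 'a \<Rightarrow> 'a \<Rightarrow> int)" "a \<noteq> b" "b \<noteq> c" "a \<noteq> c"
  shows "realm (sh a b c h i j k)"
proof -
  have e1: "sh a b c h' 0 j 0 = sh b c a h' j 0 0" for h' by (simp add: sh_def fun_eq_iff)
  have e2: "sh a b c h' 0 0 k = sh c a b h' k 0 0" for h' by (simp add: sh_def fun_eq_iff)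
  have "sh a b c h i j k = sh a b c (sh a b c (sh a b c h i 0 0) 0 j 0) 0 0 k" by (simp add: sh_sh)
  moreover have "realm (sh a b c h i 0 0)" using real_sh1 assms by simp
  then have "realm (sh a b c (sh a b c h i 0 0) 0 j 0)" unfolding e1 using real_sh1 assms by simp
  then have "realm (sh a b c (sh a b c (sh a b c h i 0 0) 0 j 0) 0 0 k)" unfolding e2 using real_sh1 assms by simp
  ultimately show ?thesis by simp
qed

end

lemma cube_prop:
  fixes A1 A2 A3 P1 P2 P3 K :: "'a set"
  assumes "c \<in> A1"
    and "a \<in> A2"
    and "b \<in> A3"
    and "c \<in> P1"
    and "a \<in> P2"
    and "b \<in> P3"
    and "((a \<in> A2 \<longleftrightarrow> a \<in> P1) \<and> (b \<in> A2 \<longleftrightarrow> b \<in> P1) \<and> (c \<in> A2 \<longleftrightarrow> c \<in> P1)) \<or> (a \<in> P1 \<and> b \<in> A2 \<and> \<not> (a \<in> A2 \<and> b \<in> P1)) \<or> (a \<in> A2 \<and> a \<notin> P1 \<and> b \<in> P1 \<and> b \<notin> A2)"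
    and "((a \<in> A1 \<longleftrightarrow> a \<in> P1) \<and> (b \<in> A1 \<longleftrightarrow> b \<in> P1) \<and> (c \<in> A1 \<longleftrightarrow> c \<in> P1)) \<or> (b \<in> P1 \<and> c \<in> A1 \<and> \<not> (b \<in> A1 \<and> c \<in> P1)) \<or> (b \<in> A1 \<and> b \<notin> P1 \<and> c \<in> P1 \<and> c \<notin> A1)"
    and "((a \<in> A3 \<longleftrightarrow> a \<in> P2) \<and> (b \<in> A3 \<longleftrightarrow> b \<in> P2) \<and> (c \<in> A3 \<longleftrightarrow> c \<in> P2)) \<or> (b \<in> P2 \<and> c \<in> A3 \<and> \<not> (b \<in> A3 \<and> c \<in> P2)) \<or> (b \<in> A3 \<and> b \<notin> P2 \<and> c \<in> P2 \<and> c \<notin> A3)"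
    and "((a \<in> A2 \<longleftrightarrow> a \<in> P2) \<and> (b \<in> A2 \<longleftrightarrow> b \<in> P2) \<and> (c \<in> A2 \<longleftrightarrow> c \<in> P2)) \<or> (c \<in> P2 \<and> a \<in> A2 \<and> \<not> (c \<in> A2 \<and> a \<in> P2)) \<or> (c \<in> A2 \<and> c \<notin> P2 \<and> a \<in> P2 \<and> a \<notin> A2)"
    and "((a \<in> A3 \<longleftrightarrow> a \<in> P3) \<and> (b \<in> A3 \<longleftrightarrow> b \<in> P3) \<and> (c \<in> A3 \<longleftrightarrow> c \<in> P3)) \<or> (a \<in> P3 \<and> b \<in> A3 \<and> \<not> (a \<in> A3 \<and> b \<in> P3)) \<or> (a \<in> A3 \<and> a \<notin> P3 \<and> b \<in> P3 \<and> b \<notin> A3)"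
    and "((a \<in> A1 \<longleftrightarrow> a \<in> P3) \<and> (b \<in> A1 \<longleftrightarrow> b \<in> P3) \<and> (c \<in> A1 \<longleftrightarrow> c \<in> P3)) \<or> (c \<in> P3 \<and> a \<in> A1 \<and> \<not> (c \<in> A1 \<and> a \<in> P3)) \<or> (c \<in> A1 \<and> c \<notin> P3 \<and> a \<in> P3 \<and> a \<notin> A1)"
    and "((a \<in> P2 \<longleftrightarrow> a \<in> K) \<and> (b \<in> P2 \<longleftrightarrow> b \<in> K) \<and> (c \<in> P2 \<longleftrightarrow> c \<in> K)) \<or> (a \<in> K \<and> b \<in> P2 \<and> \<not> (a \<in> P2 \<and> b \<in> K)) \<or> (a \<in> P2 \<and> a \<notin> K \<and> b \<in> K \<and> b \<notin> P2)"
    and "((a \<in> P3 \<longleftrightarrow> a \<in> K) \<and> (b \<in> P3 \<longleftrightarrow> b \<in> K) \<and> (c \<in> P3 \<longleftrightarrow> c \<in> K)) \<or> (b \<in> K \<and> c \<in> P3 \<and> \<not> (b \<in> P3 \<and> c \<in> K)) \<or> (b \<in> P3 \<and> b \<notin> K \<and> c \<in> K \<and> c \<notin> P3)"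
    and "((a \<in> P1 \<longleftrightarrow> a \<in> K) \<and> (b \<in> P1 \<longleftrightarrow> b \<in> K) \<and> (c \<in> P1 \<longleftrightarrow> c \<in> K)) \<or> (c \<in> K \<and> a \<in> P1 \<and> \<not> (c \<in> P1 \<and> a \<in> K)) \<or> (c \<in> P1 \<and> c \<notin> K \<and> a \<in> K \<and> a \<notin> P1)"
  shows "{a,b,c} \<subseteq> A1 \<and> {a,b,c} \<subseteq> A2 \<and> {a,b,c} \<subseteq> A3 \<and> {a,b,c} \<subseteq> P1 \<and> {a,b,c} \<subseteq> P2 \<and> {a,b,c} \<subseteq> P3 \<and> {a,b,c} \<subseteq> K"
  using assms by blast

context scc begin

lemma layer:
  fixes a b c :: 'a
  assumes d: "a \<noteq> b" "b \<noteq> c" "a \<noteq> c" and r: "realm h0" and o: "outs a b c h0"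
    and z: "h0 a b = 0" "h0 b c = 0" "h0 c a = 0"
  shows "\<forall>j\<in>{0,1}. \<forall>k\<in>{0,1}. {a,b,c} \<subseteq> F (sh a b c h0 (int n) j k)"
proof -
  define G where "G i j k = F (sh a b c h0 i j k)" for i j k
  have R: "realm (sh a b c h0 i j k)" for i j k using real_sh[OF r d] .
  have AS: "\<And>x y. sh a b c h0 i j k y x = - sh a b c h0 i j k x y" for i j k using real_antisym[OF R] .
  have O: "outs a b c (sh a b c h0 i j k)" for i j k using outs_sh[OF d o] .
  have z2: "h0 b a = 0" "h0 c b = 0" "h0 a c = 0" using real_antisym[OF r] z by (metis minus_zero)+
  have CW: "cwm (sh a b c h0 i j k) x \<longleftrightarrow> (x = a \<and> 0 < i \<and> k < 0) \<or> (x = b \<and> 0 < j \<and> i < 0) \<or> (x = c \<and> 0 < k \<and> j < 0)" for i j k x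
    using cw3[OF d AS O, of i j k x] sh_vals[OF d, of h0 i j k] z z2 by auto
  have C1g: "s \<in> G i j k" if "s \<noteq> t" "\<forall>x. \<not> cwm (sh a b c h0 i j k) x" "cwm (shiftm (sh a b c h0 i j k) t s) t" for s t i j k
    using C1[OF R that] by (simp add: G_def)
  have Coreg: "s \<in> G i j k" if "s \<noteq> t" "s \<in> F (shiftm (sh a b c h0 i j k) t s)" "t \<in> F (shiftm (sh a b c h0 i j k) t s)" for s t i j k
    using Core[OF R that] by (simp add: G_def)
  have Eqg: "F (shiftm (sh a b c h0 i j k) t s) = G i j k" if "s \<noteq> t" "s \<in> F (shiftm (sh a b c h0 i j k) t s)" "t \<in> F (shiftm (sh a b c h0 i j k) t s)" "s \<in> G i j k" "t \<in> G i j k" for s t i j k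
    using Eqv[OF R that(1-3)] that(4,5) by (simp add: G_def)
  note shs = sh_ab[OF d] sh_ba[OF d] sh_bc[OF d] sh_cb[OF d] sh_ca[OF d] sh_ac[OF d]
  show ?thesis
  proof (induction n)
    case 0
    have f1: "c \<in> G 1 0 0" by (rule C1g[of c a]) (use d in \<open>auto simp: CW shs\<close>)
    have f2: "a \<in> G 0 1 0" by (rule C1g[of a b]) (use d in \<open>auto simp: CW shs\<close>)
    have f3: "b \<in> G 0 0 1" by (rule C1g[of b c]) (use d in \<open>auto simp: CW shs\<close>)
    have f4: "c \<in> G 1 1 0" by (rule C1g[of c a]) (use d in \<open>auto simp: CW shs\<close>)
    have f5: "a \<in> G 0 1 1" by (rule C1g[of a b]) (use d in \<open>auto simp: CW shs\<close>)
    have f6: "b \<in> G 1 0 1" by (rule C1g[of b c]) (use d in \<open>auto simp: CW shs\<close>)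
    have sw: "G i' j' k' = G i j k \<or> (s \<in> G i j k \<and> t \<in> G i' j' k' \<and> \<not> (s \<in> G i' j' k' \<and> t \<in> G i j k))
       \<or> (s \<in> G i' j' k' \<and> s \<notin> G i j k \<and> t \<in> G i j k \<and> t \<notin> G i' j' k')"
      if "s \<noteq> t" "shiftm (sh a b c h0 i j k) t s = sh a b c h0 i' j' k'" for s t i j k i' j' k'
      using SWprop[OF R that(1), of i j k] that(2) by (simp add: G_def)
    have swc: "((a \<in> G i' j' k' \<longleftrightarrow> a \<in> G i j k) \<and> (b \<in> G i' j' k' \<longleftrightarrow> b \<in> G i j k) \<and> (c \<in> G i' j' k' \<longleftrightarrow> c \<in> G i j k))
       \<or> (s \<in> G i j k \<and> t \<in> G i' j' k' \<and> \<not> (s \<in> G i' j' k' \<and> t \<in> G i j k))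
       \<or> (s \<in> G i' j' k' \<and> s \<notin> G i j k \<and> t \<in> G i j k \<and> t \<notin> G i' j' k')"
      if "s \<noteq> t" "shiftm (sh a b c h0 i j k) t s = sh a b c h0 i' j' k'" for s t i j k i' j' k'
      using sw[OF that] by auto
    have e1: "((a \<in> G 0 1 0 \<longleftrightarrow> a \<in> G 1 1 0) \<and> (b \<in> G 0 1 0 \<longleftrightarrow> b \<in> G 1 1 0) \<and> (c \<in> G 0 1 0 \<longleftrightarrow> c \<in> G 1 1 0)) \<or> (a \<in> G 1 1 0 \<and> b \<in> G 0 1 0 \<and> \<not> (a \<in> G 0 1 0 \<and> b \<in> G 1 1 0)) \<or> (a \<in> G 0 1 0 \<and> a \<notin> G 1 1 0 \<and> b \<in> G 1 1 0 \<and> b \<notin> G 0 1 0)"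
      by (rule swc) (use d in \<open>simp_all add: shs\<close>)
    have e2: "((a \<in> G 1 0 0 \<longleftrightarrow> a \<in> G 1 1 0) \<and> (b \<in> G 1 0 0 \<longleftrightarrow> b \<in> G 1 1 0) \<and> (c \<in> G 1 0 0 \<longleftrightarrow> c \<in> G 1 1 0)) \<or> (b \<in> G 1 1 0 \<and> c \<in> G 1 0 0 \<and> \<not> (b \<in> G 1 0 0 \<and> c \<in> G 1 1 0)) \<or> (b \<in> G 1 0 0 \<and> b \<notin> G 1 1 0 \<and> c \<in> G 1 1 0 \<and> c \<notin> G 1 0 0)"
      by (rule swc) (use d in \<open>simp_all add: shs\<close>)
    have e3: "((a \<in> G 0 0 1 \<longleftrightarrow> a \<in> G 0 1 1) \<and> (b \<in> G 0 0 1 \<longleftrightarrow> b \<in> G 0 1 1) \<and> (c \<in> G 0 0 1 \<longleftrightarrow> c \<in> G 0 1 1)) \<or> (b \<in> G 0 1 1 \<and> c \<in> G 0 0 1 \<and> \<not> (b \<in> G 0 0 1 \<and> c \<in> G 0 1 1)) \<or> (b \<in> G 0 0 1 \<and> b \<notin> G 0 1 1 \<and> c \<in> G 0 1 1 \<and> c \<notin> G 0 0 1)"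
      by (rule swc) (use d in \<open>simp_all add: shs\<close>)
    have e4: "((a \<in> G 0 1 0 \<longleftrightarrow> a \<in> G 0 1 1) \<and> (b \<in> G 0 1 0 \<longleftrightarrow> b \<in> G 0 1 1) \<and> (c \<in> G 0 1 0 \<longleftrightarrow> c \<in> G 0 1 1)) \<or> (c \<in> G 0 1 1 \<and> a \<in> G 0 1 0 \<and> \<not> (c \<in> G 0 1 0 \<and> a \<in> G 0 1 1)) \<or> (c \<in> G 0 1 0 \<and> c \<notin> G 0 1 1 \<and> a \<in> G 0 1 1 \<and> a \<notin> G 0 1 0)"
      by (rule swc) (use d in \<open>simp_all add: shs\<close>)
    have e5: "((a \<in> G 0 0 1 \<longleftrightarrow> a \<in> G 1 0 1) \<and> (b \<in> G 0 0 1 \<longleftrightarrow> b \<in> G 1 0 1) \<and> (c \<in> G 0 0 1 \<longleftrightarrow> c \<in> G 1 0 1)) \<or> (a \<in> G 1 0 1 \<and> b \<in> G 0 0 1 \<and> \<not> (a \<in> G 0 0 1 \<and> b \<in> G 1 0 1)) \<or> (a \<in> G 0 0 1 \<and> a \<notin> G 1 0 1 \<and> b \<in> G 1 0 1 \<and> b \<notin> G 0 0 1)"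
      by (rule swc) (use d in \<open>simp_all add: shs\<close>)
    have e6: "((a \<in> G 1 0 0 \<longleftrightarrow> a \<in> G 1 0 1) \<and> (b \<in> G 1 0 0 \<longleftrightarrow> b \<in> G 1 0 1) \<and> (c \<in> G 1 0 0 \<longleftrightarrow> c \<in> G 1 0 1)) \<or> (c \<in> G 1 0 1 \<and> a \<in> G 1 0 0 \<and> \<not> (c \<in> G 1 0 0 \<and> a \<in> G 1 0 1)) \<or> (c \<in> G 1 0 0 \<and> c \<notin> G 1 0 1 \<and> a \<in> G 1 0 1 \<and> a \<notin> G 1 0 0)"
      by (rule swc) (use d in \<open>simp_all add: shs\<close>)
    have e7: "((a \<in> G 0 1 1 \<longleftrightarrow> a \<in> G 1 1 1) \<and> (b \<in> G 0 1 1 \<longleftrightarrow> b \<in> G 1 1 1) \<and> (c \<in> G 0 1 1 \<longleftrightarrow> c \<in> G 1 1 1)) \<or> (a \<in> G 1 1 1 \<and> b \<in> G 0 1 1 \<and> \<not> (a \<in> G 0 1 1 \<and> b \<in> G 1 1 1)) \<or> (a \<in> G 0 1 1 \<and> a \<notin> G 1 1 1 \<and> b \<in> G 1 1 1 \<and> b \<notin> G 0 1 1)"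
      by (rule swc) (use d in \<open>simp_all add: shs\<close>)
    have e8: "((a \<in> G 1 0 1 \<longleftrightarrow> a \<in> G 1 1 1) \<and> (b \<in> G 1 0 1 \<longleftrightarrow> b \<in> G 1 1 1) \<and> (c \<in> G 1 0 1 \<longleftrightarrow> c \<in> G 1 1 1)) \<or> (b \<in> G 1 1 1 \<and> c \<in> G 1 0 1 \<and> \<not> (b \<in> G 1 0 1 \<and> c \<in> G 1 1 1)) \<or> (b \<in> G 1 0 1 \<and> b \<notin> G 1 1 1 \<and> c \<in> G 1 1 1 \<and> c \<notin> G 1 0 1)"
      by (rule swc) (use d in \<open>simp_all add: shs\<close>)
    have e9: "((a \<in> G 1 1 0 \<longleftrightarrow> a \<in> G 1 1 1) \<and> (b \<in> G 1 1 0 \<longleftrightarrow> b \<in> G 1 1 1) \<and> (c \<in> G 1 1 0 \<longleftrightarrow> c \<in> G 1 1 1)) \<or> (c \<in> G 1 1 1 \<and> a \<in> G 1 1 0 \<and> \<not> (c \<in> G 1 1 0 \<and> a \<in> G 1 1 1)) \<or> (c \<in> G 1 1 0 \<and> c \<notin> G 1 1 1 \<and> a \<in> G 1 1 1 \<and> a \<notin> G 1 1 0)"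
      by (rule swc) (use d in \<open>simp_all add: shs\<close>)
    have cube: "{a,b,c} \<subseteq> G 1 0 0 \<and> {a,b,c} \<subseteq> G 0 1 0 \<and> {a,b,c} \<subseteq> G 0 0 1 \<and> {a,b,c} \<subseteq> G 1 1 0 \<and> {a,b,c} \<subseteq> G 0 1 1 \<and> {a,b,c} \<subseteq> G 1 0 1 \<and> {a,b,c} \<subseteq> G 1 1 1"
      by (rule cube_prop[OF f1 f2 f3 f4 f5 f6 e1 e2 e3 e4 e5 e6 e7 e8 e9])
    have z1: "b \<in> G 0 0 0" by (rule Coreg[of b a]) (use d cube in \<open>simp_all add: shs G_def\<close>)
    have z2: "c \<in> G 0 0 0" by (rule Coreg[of c b]) (use d cube in \<open>simp_all add: shs G_def\<close>)
    have z3: "a \<in> G 0 0 0" by (rule Coreg[of a c]) (use d cube in \<open>simp_all add: shs G_def\<close>)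
    show ?case using cube z1 z2 z3 by (auto simp: G_def)
  next
    case (Suc n)
    define m where "m = int n + 1"
    have m0: "0 < m" and mm: "m - 1 = int n" and ms: "int (Suc n) = m" by (simp_all add: m_def)
    have IH: "{a,b,c} \<subseteq> G (int n) j k" if "j \<in> {0,1}" "k \<in> {0,1}" for j k
      using Suc.IH that by (auto simp: G_def)
    have IH': "{a,b,c} \<subseteq> G (m - 1) j k" if "j \<in> {0,1}" "k \<in> {0,1}" for j k
      using IH[OF that] mm by simp
    have A_a: "a \<in> G m 0 0" by (rule Coreg[of a b]) (use d IH'[of 0 0] in \<open>simp_all add: shs G_def\<close>)
    have A_c: "c \<in> G m 0 0" by (rule C1g[of c a]) (use d m0 in \<open>auto simp: CW shs\<close>)
    have C_a: "a \<in> G m 0 1" by (rule Coreg[of a b]) (use d IH'[of 0 1] in \<open>simp_all add: shs G_def\<close>)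
    have C_b: "b \<in> G m 0 1" by (rule C1g[of b c]) (use d m0 in \<open>auto simp: CW shs\<close>)
    have C_c: "c \<in> G m 0 1" by (rule Coreg[of c a]) (use d A_a A_c in \<open>simp_all add: shs G_def\<close>)
    have AC: "F (shiftm (sh a b c h0 m 0 0) c a) = G m 0 0"
      by (rule Eqg[of a c]) (use d A_a A_c C_a C_c in \<open>simp_all add: shs G_def\<close>)
    have A_b: "b \<in> G m 0 0" using AC C_b d by (simp add: shs G_def)
    have B_a: "a \<in> G m 1 0" by (rule Coreg[of a b]) (use d IH'[of 1 0] in \<open>simp_all add: shs G_def\<close>)
    have B_c: "c \<in> G m 1 0" by (rule C1g[of c a]) (use d m0 in \<open>auto simp: CW shs\<close>)
    have B_b: "b \<in> G m 1 0" by (rule Coreg[of b c]) (use d A_b A_c in \<open>simp_all add: shs G_def\<close>)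
    have D_a: "a \<in> G m 1 1" by (rule Coreg[of a b]) (use d IH'[of 1 1] in \<open>simp_all add: shs G_def\<close>)
    have D_b: "b \<in> G m 1 1" by (rule Coreg[of b c]) (use d C_b C_c in \<open>simp_all add: shs G_def\<close>)
    have D_c: "c \<in> G m 1 1" by (rule Coreg[of c a]) (use d B_a B_c in \<open>simp_all add: shs G_def\<close>)
    show ?case unfolding ms using A_a A_b A_c B_a B_b B_c C_a C_b C_c D_a D_b D_c by (auto simp: G_def)
  qed
qed

end

lemma outs_rot: "outs a b c h \<Longrightarrow> outs b c a h"
  unfolding outs_def by (simp add: insert_commute)

lemma outs_swap: "outs a b c h \<Longrightarrow> outs a c b h"
  unfolding outs_def by (simp add: insert_commute)

context scc begin

lemma atype:
  fixes a b c :: 'a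
  assumes d: "a \<noteq> b" "b \<noteq> c" "a \<noteq> c" and r: "realm h" and o: "outs a b c h"
    and v: "h a b = 2 * int n" "h b c = 0" "h c a = 0"
  shows "{a,b,c} \<subseteq> F h"
proof -
  define h0 where "h0 = sh a b c h (- int n) 0 0"
  have r0: "realm h0" unfolding h0_def by (rule real_sh[OF r d])
  have o0: "outs a b c h0" unfolding h0_def by (rule outs_sh[OF d o])
  have z: "h0 a b = 0" "h0 b c = 0" "h0 c a = 0" using v sh_vals[OF d, of h "- int n" 0 0] by (simp_all add: h0_def)
  have "{a,b,c} \<subseteq> F (sh a b c h0 (int n) 0 0)" using layer[OF d r0 o0 z, of n] by simp
  moreover have "sh a b c h0 (int n) 0 0 = h" by (simp add: h0_def sh_sh sh_0)
  ultimately show ?thesis by simp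
qed

lemma cstep:
  fixes a b c :: 'a
  assumes d: "a \<noteq> b" "b \<noteq> c" "a \<noteq> c" and r: "realm h" and o: "outs a b c h"
    and nn: "0 \<le> h a b" "0 \<le> h b c" "0 \<le> h c a"
    and IH: "\<And>h'. realm h' \<Longrightarrow> outs a b c h' \<Longrightarrow> 0 \<le> h' a b \<Longrightarrow> 0 \<le> h' b c \<Longrightarrow> 0 \<le> h' c a
       \<Longrightarrow> h' a b + h' b c + h' c a < h a b + h b c + h c a \<Longrightarrow> {a,b,c} \<subseteq> F h'"
  shows "c \<in> F h"
proof -
  have AS: "\<And>x y. h y x = - h x y" using real_antisym[OF r] .
  have noCW: "\<forall>x. \<not> cwm h x" using cw3[OF d AS o] nn AS[of a b] AS[of b c] AS[of c a] by auto
  define h' where "h' = sh a b c h 0 0 (-1)"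
  have hs: "shiftm h a c = h'" using sh_ac[OF d, of h 0 0 0] by (simp add: h'_def sh_0)
  have r': "realm h'" unfolding h'_def by (rule real_sh[OF r d])
  have o': "outs a b c h'" unfolding h'_def by (rule outs_sh[OF d o])
  have v': "h' a b = h a b" "h' b c = h b c" "h' c a = h c a - 2" "h' a c = h a c + 2"
    using sh_vals[OF d, of h 0 0 "-1"] by (simp_all add: h'_def)
  show ?thesis
  proof (cases "2 \<le> h c a")
    case True
    have "{a,b,c} \<subseteq> F h'" by (rule IH[OF r' o']) (use nn True v' in auto)
    then show ?thesis using Core[OF r, of c a] d hs by auto
  next
    case False
    show ?thesis
    proof (cases "0 < h a b")
      case True
      have AS': "\<And>x y. h' y x = - h' x y" using real_antisym[OF r'] .
      have "cwm h' a" using cw3[OF d AS' o', of a] v' True False AS[of c a] by auto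
      then show ?thesis using C1[OF r, of c a] d noCW hs by auto
    next
      case False2: False
      have ab: "h a b = 0" using nn False2 by simp
      have "even (h a b - h c a)" using real_parity[OF r, of a b c a] d by simp
      then have ev1: "even (h c a)" using ab by simp
      have ca: "h c a = 0"
      proof (rule ccontr)
        assume "h c a \<noteq> 0"
        then have "h c a = 1" using nn False by linarith
        then show False using ev1 by simp
      qed
      have "even (h b c - h a b)" using real_parity[OF r, of b c a b] d by simp
      then have ev2: "even (h b c)" using ab by simp
      define n where "n = nat (h b c div 2)"
      have bc: "h b c = 2 * int n" using ev2 nn(2) unfolding n_def by auto
      have "{b,c,a} \<subseteq> F h"
        by (rule atype) (use d r outs_rot[OF o] bc ca ab in auto)
      then show ?thesis by simp
    qed
  qed
qed

lemma main_aux: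
  "\<forall>(a::'a) b c h. a \<noteq> b \<and> b \<noteq> c \<and> a \<noteq> c \<and> realm h \<and> outs a b c h \<and> 0 \<le> h a b \<and> 0 \<le> h b c \<and> 0 \<le> h c a
     \<and> nat (h a b + h b c + h c a) = N \<longrightarrow> {a,b,c} \<subseteq> F h"
proof (induction N rule: less_induct)
  case (less N)
  show ?case
  proof (intro allI impI)
    fix a b c :: 'a and h
    assume H: "a \<noteq> b \<and> b \<noteq> c \<and> a \<noteq> c \<and> realm h \<and> outs a b c h \<and> 0 \<le> h a b \<and> 0 \<le> h b c \<and> 0 \<le> h c a
     \<and> nat (h a b + h b c + h c a) = N"
    then have d: "a \<noteq> b" "b \<noteq> c" "a \<noteq> c" and r: "realm h" and o: "outs a b c h"
      and nn: "0 \<le> h a b" "0 \<le> h b c" "0 \<le> h c a" and NN: "N = nat (h a b + h b c + h c a)" by auto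
    have IH: "{x,y,z} \<subseteq> F h'" if "x \<noteq> y" "y \<noteq> z" "x \<noteq> z" "realm h'" "outs x y z h'" "0 \<le> h' x y" "0 \<le> h' y z" "0 \<le> h' z x"
       "h' x y + h' y z + h' z x < h a b + h b c + h c a" for x y z h'
    proof -
      have lt: "nat (h' x y + h' y z + h' z x) < N" unfolding NN using that(6-9) by linarith
      show ?thesis using less.IH[OF lt, rule_format, of x y z h'] that by simp
    qed
    have Ic: "{a,b,c} \<subseteq> F h'" if "realm h'" "outs a b c h'" "0 \<le> h' a b" "0 \<le> h' b c" "0 \<le> h' c a"
       "h' a b + h' b c + h' c a < h a b + h b c + h c a" for h'
      by (rule IH[OF d that])
    have Ia: "{b,c,a} \<subseteq> F h'" if "realm h'" "outs b c a h'" "0 \<le> h' b c" "0 \<le> h' c a" "0 \<le> h' a b"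
       "h' b c + h' c a + h' a b < h b c + h c a + h a b" for h'
      by (rule IH[OF d(2) d(3)[symmetric] d(1)[symmetric] that(1-5)]) (use that(6) in linarith)
    have Ib: "{c,a,b} \<subseteq> F h'" if "realm h'" "outs c a b h'" "0 \<le> h' c a" "0 \<le> h' a b" "0 \<le> h' b c"
       "h' c a + h' a b + h' b c < h c a + h a b + h b c" for h'
      by (rule IH[OF d(3)[symmetric] d(1) d(2)[symmetric] that(1-5)]) (use that(6) in linarith)
    have c: "c \<in> F h" by (rule cstep[OF d r o nn Ic])
    have a: "a \<in> F h" by (rule cstep[OF d(2) d(3)[symmetric] d(1)[symmetric] r outs_rot[OF o] nn(2,3,1) Ia])
    have b: "b \<in> F h" by (rule cstep[OF d(3)[symmetric] d(1) d(2)[symmetric] r outs_rot[OF outs_rot[OF o]] nn(3,1,2) Ib])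
    show "{a,b,c} \<subseteq> F h" using a b c by auto
  qed
qed

lemma main:
  fixes a b c :: 'a
  assumes "a \<noteq> b" "b \<noteq> c" "a \<noteq> c" "realm h" "outs a b c h" "0 \<le> h a b" "0 \<le> h b c" "0 \<le> h c a"
  shows "{a,b,c} \<subseteq> F h"
  using main_aux[rule_format, of a b c h "nat (h a b + h b c + h c a)"] assms by simp

end

lemma dom_cmp: "dominant R X \<Longrightarrow> dominant R Y \<Longrightarrow> X \<subseteq> Y \<or> Y \<subseteq> X"
proof (rule ccontr)
  assume a: "dominant R X" "dominant R Y" "\<not> (X \<subseteq> Y \<or> Y \<subseteq> X)"
  then obtain x y where "x \<in> X" "x \<notin> Y" "y \<in> Y" "y \<notin> X" by blast
  then have "maj_strict R x y" "maj_strict R y x" using a(1,2) unfolding dominant_def by blast+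
  then show False unfolding maj_strict_def by simp
qed

lemma TC_props:
  fixes R :: "'a::finite profile"
  shows "dominant R (TC R) \<and> (\<forall>Y. dominant R Y \<longrightarrow> TC R \<subseteq> Y)"
proof -
  define D where "D = {X. dominant R X}"
  have U: "UNIV \<in> D" unfolding D_def dominant_def by simp
  have fD: "finite D" by simp
  have fc: "finite (card ` D)" using fD by simp
  have ne: "card ` D \<noteq> {}" using U by blast
  obtain X where X: "X \<in> D" "card X = Min (card ` D)" using Min_in[OF fc ne] by auto
  have mn: "X \<subseteq> Y" if "Y \<in> D" for Y
  proof -
    have le: "card X \<le> card Y" using X(2) Min_le[OF fc] that by simp
    have "X \<subseteq> Y \<or> Y \<subseteq> X" using dom_cmp X(1) that unfolding D_def by blast
    then show ?thesis
    proof
      assume "Y \<subseteq> X"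
      then show "X \<subseteq> Y" using le card_seteq[of X Y] by simp
    qed simp
  qed
  have P: "dominant R X \<and> (\<forall>Y. dominant R Y \<longrightarrow> X \<subseteq> Y)" using X(1) mn unfolding D_def by blast
  have "\<exists>!X. dominant R X \<and> (\<forall>Y. dominant R Y \<longrightarrow> X \<subseteq> Y)"
  proof (rule ex1I[of _ X])
    show "dominant R X \<and> (\<forall>Y. dominant R Y \<longrightarrow> X \<subseteq> Y)" by (rule P)
  next
    fix X' assume "dominant R X' \<and> (\<forall>Y. dominant R Y \<longrightarrow> X' \<subseteq> Y)"
    then show "X' = X" using P by blast
  qed
  then show ?thesis unfolding TC_def by (rule theI')
qed

context scc begin

lemma key:
  assumes P: "is_profile R" and c4: "card (TC R) < 4"
  shows "TC R \<subseteq> f R"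
proof -
  define T where "T = TC R"
  define h where "h = margin R"
  have dT: "dominant R T" and minT: "\<And>Y. dominant R Y \<Longrightarrow> T \<subseteq> Y"
    using TC_props[of R] unfolding T_def by auto
  have fR: "f R = F h" unfolding h_def by (rule F_eq[OF P, symmetric])
  have rh: "realm h" unfolding h_def realm_def using P by blast
  have AS: "\<And>x y. h y x = - h x y" unfolding h_def by (rule margin_antisym)
  have beat: "0 < h x y" if "x \<in> T" "y \<notin> T" for x y
    using dT that unfolding dominant_def h_def maj_strict_iff by blast
  have Tne: "T \<noteq> {}" using dT unfolding dominant_def by blast
  have fT: "finite T" by simp
  have sub: "S = T" if "S \<subseteq> T" "S \<noteq> {}" "\<forall>x\<in>S. \<forall>y\<in>T-S. 0 < h x y" for S
  proof -
    have "dominant R S" unfolding dominant_def maj_strict_iff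
    proof (intro conjI ballI allI impI)
      show "S \<noteq> {}" by fact
    next
      fix x y assume "x \<in> S" "y \<notin> S"
      then show "0 < margin R x y" using that beat unfolding h_def by (cases "y \<in> T") auto
    qed
    then show ?thesis using minT that(1) by blast
  qed
  have "card T \<noteq> 0" using Tne fT by simp
  moreover have "card T < 4" using c4 unfolding T_def .
  ultimately have cT: "card T = 1 \<or> card T = 2 \<or> card T = 3" by arith
  have "T \<subseteq> F h"
  proof -
    consider "card T = 1" | "card T = 2" | "card T = 3" using cT by blast
    then show ?thesis
    proof cases
      case 1
      then obtain x where Tx: "T = {x}" by (rule card_1_singletonE)
      have "cwm h x" unfolding cwm_def using beat Tx by auto
      then have "F h = {x}" using F_single[OF rh] by simp
      then show ?thesis using Tx by simp
    next
      case 2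
      then obtain x y where Txy: "T = {x,y}" "x \<noteq> y" by (auto simp: card_2_iff)
      have n1: "\<not> 0 < h x y"
      proof
        assume "0 < h x y"
        then have "{x} = T" by (intro sub) (use Txy in auto)
        then show False using Txy by auto
      qed
      have n2: "\<not> 0 < h y x"
      proof
        assume "0 < h y x"
        then have "{y} = T" by (intro sub) (use Txy in auto)
        then show False using Txy by auto
      qed
      have z: "h x y = 0" "h y x = 0" using n1 n2 AS[of x y] by linarith+
      have noCW: "\<forall>z. \<not> cwm h z"
      proof (intro allI notI)
        fix w assume cw: "cwm h w"
        show False
        proof (cases "w \<in> T")
          case True
          then show False using cw z Txy unfolding cwm_def by auto
        next
          case False
          then have "0 < h x w" using beat Txy by auto
          moreover have "0 < h w x" using cw False Txy unfolding cwm_def by auto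
          ultimately show False using AS[of x w] by linarith
        qed
      qed
      have cwx: "cwm (shiftm h x y) x"
        unfolding cwm_def shiftm_def using z beat Txy by auto
      have cwy: "cwm (shiftm h y x) y"
        unfolding cwm_def shiftm_def using z beat Txy by auto
      have "y \<in> F h" using C1[OF rh, of y x] Txy noCW cwx by auto
      moreover have "x \<in> F h" using C1[OF rh, of x y] Txy noCW cwy by auto
      ultimately show ?thesis using Txy by auto
    next
      case 3
      then obtain a b c where T3: "T = {a,b,c}" "a \<noteq> b" "b \<noteq> c" "a \<noteq> c" by (auto simp: card_3_iff)
      have o: "outs a b c h" unfolding outs_def using beat T3 by auto
      have ns: False if "S \<subseteq> T" "S \<noteq> {}" "S \<noteq> T" "\<forall>x\<in>S. \<forall>y\<in>T-S. 0 < h x y" for S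
        using sub that by blast
      have ne: "{a} \<noteq> T" "{b} \<noteq> T" "{c} \<noteq> T" "{a,b} \<noteq> T" "{b,c} \<noteq> T" "{a,c} \<noteq> T"
        using T3 by (metis insertI1 insert_commute insert_iff singletonD)+
      have s1: "\<not> (0 < h a b \<and> 0 < h a c)" using ns[of "{a}", OF _ _ ne(1)] T3 by auto
      have s2: "\<not> (0 < h b a \<and> 0 < h b c)" using ns[of "{b}", OF _ _ ne(2)] T3 by auto
      have s3: "\<not> (0 < h c a \<and> 0 < h c b)" using ns[of "{c}", OF _ _ ne(3)] T3 by auto
      have s4: "\<not> (0 < h a c \<and> 0 < h b c)" using ns[of "{a,b}", OF _ _ ne(4)] T3 by auto
      have s5: "\<not> (0 < h b a \<and> 0 < h c a)" using ns[of "{b,c}", OF _ _ ne(5)] T3 by auto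
      have s6: "\<not> (0 < h a b \<and> 0 < h c b)" using ns[of "{a,c}", OF _ _ ne(6)] T3 by auto
      have sg: "(0 \<le> h a b \<and> 0 \<le> h b c \<and> 0 \<le> h c a) \<or> (0 \<le> h a c \<and> 0 \<le> h c b \<and> 0 \<le> h b a)"
        using s1 s2 s3 s4 s5 s6 AS[of a b] AS[of b c] AS[of c a] by linarith
      then show ?thesis
      proof
        assume "0 \<le> h a b \<and> 0 \<le> h b c \<and> 0 \<le> h c a"
        then show ?thesis using main[OF T3(2-4) rh o] T3 by auto
      next
        assume "0 \<le> h a c \<and> 0 \<le> h c b \<and> 0 \<le> h b a"
        then show ?thesis using main[OF T3(4) T3(3)[symmetric] T3(2) rh outs_swap[OF o]] T3 by auto
      qed
    qed
  qed
  then show ?thesis using fR unfolding T_def by simp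
qed

end

theorem lemma7:
  fixes f :: "'a::finite profile \<Rightarrow> 'a set"
  assumes "card (UNIV :: 'a set) \<ge> 3"
    and "is_SCC f"
    and "pairwise_scc f"
    and "strongly_condorcet_consistent f"
    and "strategyproof f"
    and "homogeneous f"
  shows "k_f f \<ge> 4"
proof -
  interpret scc f using assms(2-5) by (rule scc.intro)
  define K where "K = {k \<in> {1..card (UNIV :: 'a set) + 1}. \<forall>R. is_profile R \<longrightarrow> card (TC R) < k \<longrightarrow> TC R \<subseteq> f R}"
  have k4: "4 \<in> K" unfolding K_def using assms(1) key by auto
  have fK: "finite K" unfolding K_def by simp
  have "4 \<le> Max K" using Max_ge[OF fK k4] .
  then show ?thesis unfolding k_f_def K_def by simp
qed

end
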